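(* Let $R$ be a local ring and let $s=\sum_{i=1}^{\infty}s_ix^i\in R[[x]]$ be central in $R[[x]]$ with $s\in J\big(R[[x]]\big)$. Let $A(x)\in M_2\big(R[[x]];s\big)$. If $A(0)$ is similar in $M_2(R;s(0))$ to $\left[\begin{smallmatrix} u&1\\ v&w\end{smallmatrix}\right]$ (respectively, to $\left[\begin{smallmatrix} w&1\\ v&u\end{smallmatrix}\right]$) for some $u\in 1+J(R)$, $v\in U(R)$, $w\in J(R)$, then $A(x)$ is similar in $M_2\big(R[[x]];s\big)$ to $\left[\begin{smallmatrix} u(x)&1\\ v(x)&w(x)\end{smallmatrix}\right]$ (respectively, to $\left[\begin{smallmatrix} w(x)&1\\ v(x)&u(x)\end{smallmatrix}\right]$) for some $u(x)\in 1+J\big(R[[x]]\big)$, $v(x)\in U\big(R[[x]]\big)$, $w(x)\in J\big(R[[x]]\big)$ with $u(0)=u$, $v(0)=v$, $w(0)=w$.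
   Context: All rings are associative with identity. A ring $R$ is local if $R/J(R)$ is a division ring, where $J(R)$ is the Jacobson radical; $U(T)$ is the group of units of a ring $T$. $R[[x]]$ is the formal power series ring; for $f\in R[[x]]$, $f(0)$ is its constant term, and for a matrix $A(x)$ over $R[[x]]$, $A(0)$ is obtained by taking constant terms of all entries. For a ring $T$ and a central element $s\in T$, $M_2(T;s)$ denotes the ring whose elements are the $2\times 2$ arrays $\left[\begin{smallmatrix} a&b\\ c&d\end{smallmatrix}\right]$ with $a,b,c,d\in T$, with componentwise addition and multiplication $\left[\begin{smallmatrix} a&b\\ c&d\end{smallmatrix}\right]\left[\begin{smallmatrix} a'&b'\\ c'&d'\end{smallmatrix}\right]=\left[\begin{smallmatrix} aa'+s^2bc'&ab'+bd'\\ ca'+dc'&s^2cb'+dd'\end{smallmatrix}\right]$. Two elements $A,B\in M_2(T;s)$ are similar if $B=P^{-1}AP$ for some unit $P$ of $M_2(T;s)$. *)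

theory Defs
  imports "HOL-Computational_Algebra.Formal_Power_Series"
begin

definition units_of_ring :: "'a::ring_1 set" where
  "units_of_ring = {a. \<exists>b. a * b = 1 \<and> b * a = 1}"

(* Jacobson radical, via the standard element-wise characterization:
   a \<in> J(R) iff 1 - r a is left invertible for every r \<in> R. *)
definition jacobson :: "'a::ring_1 set" where
  "jacobson = {a. \<forall>r. \<exists>y. y * (1 - r * a) = 1}"

(* R is local iff R/J(R) is a division ring: the quotient is nonzero (1 \<notin> J)
   and every element outside J is invertible modulo J. *)
definition local_ring :: "'a::ring_1 itself \<Rightarrow> bool" where
  "local_ring _ \<longleftrightarrow> (1::'a) \<notin> jacobson \<and>
     (\<forall>a::'a. a \<notin> jacobson \<longrightarrow>
        (\<exists>b. a * b - 1 \<in> jacobson \<and> b * a - 1 \<in> jacobson))"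

(* Elements of M_2(T;s): arrays [a b; c d] encoded as (a, b, c, d) *)
type_synonym 'a m2 = "'a \<times> 'a \<times> 'a \<times> 'a"

definition m2mult :: "'a::ring_1 \<Rightarrow> 'a m2 \<Rightarrow> 'a m2 \<Rightarrow> 'a m2" where
  "m2mult s X Y = (case X of (a, b, c, d) \<Rightarrow> case Y of (a', b', c', d') \<Rightarrow>
     (a * a' + s^2 * b * c', a * b' + b * d', c * a' + d * c', s^2 * c * b' + d * d'))"

definition m2one :: "'a::ring_1 m2" where
  "m2one = (1, 0, 0, 1)"

definition m2similar :: "'a::ring_1 \<Rightarrow> 'a m2 \<Rightarrow> 'a m2 \<Rightarrow> bool" where
  "m2similar s A B \<longleftrightarrow> (\<exists>P Q. m2mult s P Q = m2one \<and> m2mult s Q P = m2one \<and>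
      B = m2mult s (m2mult s Q A) P)"

definition m2const :: "'a::ring_1 fps m2 \<Rightarrow> 'a m2" where
  "m2const A = (case A of (a, b, c, d) \<Rightarrow> (fps_nth a 0, fps_nth b 0, fps_nth c 0, fps_nth d 0))"

end

theory Submission
  imports Defs
begin

lemma fps_unit_of_const:
  fixes f :: "'a::ring_1 fps"
  assumes "fps_nth f 0 \<in> units_of_ring"
  shows "f \<in> units_of_ring"
proof -
  from assms obtain c where c: "fps_nth f 0 * c = 1" "c * fps_nth f 0 = 1" by (auto simp: units_of_ring_def)
  show ?thesis unfolding units_of_ring_def
    using fps_right_inverse[OF c(1)] fps_left_inverse'[OF c(2) c(1)] by blast
qed

lemma fps_jac_of_const:
  fixes f :: "'a::ring_1 fps"
  assumes "fps_nth f 0 \<in> jacobson"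
  shows "f \<in> jacobson"
  unfolding jacobson_def
proof (intro CollectI allI)
  fix r :: "'a fps"
  from assms obtain y where y: "y * (1 - fps_nth r 0 * fps_nth f 0) = 1" by (auto simp: jacobson_def)
  have "y * fps_nth (1 - r * f) 0 = 1" using y by simp
  from fps_left_inverse[OF this] show "\<exists>y. y * (1 - r * f) = 1" by blast
qed

definition central :: "'b::ring_1 \<Rightarrow> bool" where
  "central t \<longleftrightarrow> (\<forall>x. t * x = x * t)"

lemma central_sq: "central t \<Longrightarrow> t^2 * x = x * t^2"
  unfolding central_def power2_eq_square by (metis mult.assoc)

lemma m2_assoc:
  fixes t :: "'b::ring_1"
  assumes "central t"
  shows "m2mult t (m2mult t X Y) Z = m2mult t X (m2mult t Y Z)"
proof -
  note c = central_sq[OF assms]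
  have c2: "x * (t^2 * y) = x * (y * t^2)" for x y using c by simp
  obtain a b cc d where X: "X = (a,b,cc,d)" by (cases X) auto
  obtain a' b' c' d' where Y: "Y = (a',b',c',d')" by (cases Y) auto
  obtain a'' b'' c'' d'' where Z: "Z = (a'',b'',c'',d'')" by (cases Z) auto
  show ?thesis unfolding X Y Z m2mult_def
    by (simp add: algebra_simps c c2)
qed

lemma m2_one_left: "m2mult t m2one X = X" and m2_one_right: "m2mult t X m2one = X"
  by (cases X; simp add: m2mult_def m2one_def)+

lemma m2similar_trans:
  assumes "central t" "m2similar t A B" "m2similar t B C"
  shows "m2similar t A C"
proof -
  note as = m2_assoc[OF assms(1)]
  from assms(2) obtain P Q where PQ: "m2mult t P Q = m2one" "m2mult t Q P = m2one"
    "B = m2mult t (m2mult t Q A) P" unfolding m2similar_def by blast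
  from assms(3) obtain P' Q' where PQ': "m2mult t P' Q' = m2one" "m2mult t Q' P' = m2one"
    "C = m2mult t (m2mult t Q' B) P'" unfolding m2similar_def by blast
  have 1: "m2mult t (m2mult t P P') (m2mult t Q' Q) = m2one"
    by (simp add: as m2_one_left m2_one_right PQ PQ' flip: as[of P' Q' Q])
  have 2: "m2mult t (m2mult t Q' Q) (m2mult t P P') = m2one"
    by (simp add: as m2_one_left m2_one_right PQ PQ' flip: as[of Q P P'])
  have 3: "C = m2mult t (m2mult t (m2mult t Q' Q) A) (m2mult t P P')"
    by (simp add: PQ' PQ as)
  show ?thesis unfolding m2similar_def using 1 2 3 by blast
qed

lemma m2const_mult:
  fixes s :: "'a::ring_1 fps"
  shows "m2const (m2mult s X Y) = m2mult (fps_nth s 0) (m2const X) (m2const Y)"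
  by (cases X; cases Y; simp add: m2const_def m2mult_def fps_power_zeroth)

lemma m2_lift_inv:
  fixes s :: "'a::ring_1 fps" and X :: "'a fps m2"
  assumes s0: "fps_nth s 0 = 0" and cs: "central s"
    and h1: "m2mult 0 (m2const X) Y0 = m2one" and h2: "m2mult 0 Y0 (m2const X) = m2one"
  shows "\<exists>Y. m2mult s X Y = m2one \<and> m2mult s Y X = m2one \<and> m2const Y = Y0"
proof -
  obtain a b c d where X: "X = (a,b,c,d)" by (cases X) auto
  obtain a' b' c' d' where Y0: "Y0 = (a',b',c',d')" by (cases Y0) auto
  from h1 h2 have "fps_nth a 0 * a' = 1" "a' * fps_nth a 0 = 1" "fps_nth d 0 * d' = 1" "d' * fps_nth d 0 = 1"
    by (auto simp: X Y0 m2mult_def m2const_def m2one_def)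
  hence ua: "fps_nth a 0 \<in> units_of_ring" and ud: "fps_nth d 0 \<in> units_of_ring"
    by (auto simp: units_of_ring_def)
  obtain ai where ai: "a * ai = 1" "ai * a = 1" using fps_unit_of_const[OF ua] by (auto simp: units_of_ring_def)
  define e where "e = d - s^2 * c * ai * b"
  have "fps_nth e 0 = fps_nth d 0" by (simp add: e_def fps_power_zeroth s0)
  with ud obtain ei where ei: "e * ei = 1" "ei * e = 1" using fps_unit_of_const[of e] by (auto simp: units_of_ring_def)
  have dE: "d = e + s^2 * c * ai * b" by (simp add: e_def)
  note c = central_sq[OF cs]
  have c2: "x * (s^2 * y) = x * (y * s^2)" for x y using c by simp
  have ai2: "a * (ai * x) = x" "ai * (a * x) = x" for x using ai by (simp_all flip: mult.assoc)
  have ei2: "e * (ei * x) = x" "ei * (e * x) = x" for x using ei by (simp_all flip: mult.assoc)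
  define Y where "Y = (ai + s^2 * ai * b * ei * c * ai, -(ai * b * ei), -(ei * c * ai), ei)"
  have XY: "m2mult s X Y = m2one"
    unfolding X Y_def m2mult_def m2one_def dE
    by (simp add: algebra_simps c c2 ai ai2 ei ei2)
  have YX: "m2mult s Y X = m2one"
    unfolding X Y_def m2mult_def m2one_def dE
    by (simp add: algebra_simps c c2 ai ai2 ei ei2)
  have c0: "central (0::'a)" by (simp add: central_def)
  have "m2mult 0 (m2const X) (m2const Y) = m2one"
    using m2const_mult[of s X Y] XY s0 by (simp add: m2const_def m2one_def)
  hence "m2const Y = Y0"
    using m2_assoc[OF c0, of Y0 "m2const X" "m2const Y"] h2 by (simp add: m2_one_left m2_one_right)
  thus ?thesis using XY YX by blast
qed

lemma m2_key:
  fixes s :: "'a::ring_1 fps" and A :: "'a fps m2"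
  assumes s0: "fps_nth s 0 = 0" and cs: "central s"
    and hs: "m2similar (fps_nth s 0) (m2const A) (p, 1, q, r)"
  shows "\<exists>a' v' d'. fps_nth a' 0 = p \<and> fps_nth v' 0 = q \<and> fps_nth d' 0 = r \<and>
           m2similar s A (a', 1, v', d')"
proof -
  from hs s0 obtain P0 Q0 where PQ0: "m2mult 0 P0 Q0 = m2one" "m2mult 0 Q0 P0 = m2one"
    "(p,1,q,r) = m2mult 0 (m2mult 0 Q0 (m2const A)) P0" unfolding m2similar_def by auto
  obtain p1 p2 p3 p4 where P0: "P0 = (p1,p2,p3,p4)" by (cases P0) auto
  define P where "P = (fps_const p1, fps_const p2, fps_const p3, fps_const p4)"
  have cP: "m2const P = P0" by (simp add: P_def P0 m2const_def)
  obtain Q where Q: "m2mult s P Q = m2one" "m2mult s Q P = m2one" "m2const Q = Q0"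
    using m2_lift_inv[OF s0 cs, of P Q0] PQ0 cP by auto
  define A' where "A' = m2mult s (m2mult s Q A) P"
  have sim1: "m2similar s A A'" unfolding m2similar_def A'_def using Q by blast
  have cA': "m2const A' = (p,1,q,r)"
    unfolding A'_def using PQ0(3) by (simp add: m2const_mult s0 cP Q(3))
  obtain a b c d where A': "A' = (a,b,c,d)" by (cases A') auto
  from cA' have n: "fps_nth a 0 = p" "fps_nth b 0 = 1" "fps_nth c 0 = q" "fps_nth d 0 = r"
    by (auto simp: A' m2const_def)
  have "fps_nth b 0 \<in> units_of_ring" using n(2) by (auto simp: units_of_ring_def)
  then obtain bi where bi: "b * bi = 1" "bi * b = 1" using fps_unit_of_const[of b] by (auto simp: units_of_ring_def)
  have bi0: "fps_nth bi 0 = 1" using arg_cong[OF bi(1), of "\<lambda>f. fps_nth f 0"] n(2) by simp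
  have sim2: "m2similar s A' (a, 1, b * c, b * d * bi)"
    unfolding m2similar_def
    by (rule exI[of _ "(1,0,0,bi)"], rule exI[of _ "(1,0,0,b)"])
       (simp add: A' m2mult_def m2one_def bi)
  have "m2similar s A (a, 1, b * c, b * d * bi)" using m2similar_trans[OF cs sim1 sim2] .
  moreover have "fps_nth (b * c) 0 = q" "fps_nth (b * d * bi) 0 = r" using n bi0 by simp_all
  ultimately show ?thesis using n by blast
qed

theorem lemma2p17:
  fixes s :: "'a::ring_1 fps" and A :: "'a fps m2"
  assumes "local_ring TYPE('a)"
    and "fps_nth s 0 = 0"
    and "\<forall>f. s * f = f * s"
    and "s \<in> jacobson"
  shows "(\<forall>u v w. u - 1 \<in> (jacobson :: 'a set) \<and> v \<in> units_of_ring \<and> w \<in> jacobson \<and>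
            m2similar (fps_nth s 0) (m2const A) (u, 1, v, w) \<longrightarrow>
          (\<exists>ux vx wx. ux - 1 \<in> jacobson \<and> vx \<in> units_of_ring \<and> wx \<in> jacobson \<and>
             fps_nth ux 0 = u \<and> fps_nth vx 0 = v \<and> fps_nth wx 0 = w \<and>
             m2similar s A (ux, 1, vx, wx)))
       \<and> (\<forall>u v w. u - 1 \<in> (jacobson :: 'a set) \<and> v \<in> units_of_ring \<and> w \<in> jacobson \<and>
            m2similar (fps_nth s 0) (m2const A) (w, 1, v, u) \<longrightarrow>
          (\<exists>ux vx wx. ux - 1 \<in> jacobson \<and> vx \<in> units_of_ring \<and> wx \<in> jacobson \<and>
             fps_nth ux 0 = u \<and> fps_nth vx 0 = v \<and> fps_nth wx 0 = w \<and>
             m2similar s A (wx, 1, vx, ux)))"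
proof -
  have cs: "central s" using assms(3) by (simp add: central_def)
  note key = m2_key[OF assms(2) cs]
  show ?thesis
  proof (intro conjI allI impI)
    fix u v w :: 'a
    assume h: "u - 1 \<in> jacobson \<and> v \<in> units_of_ring \<and> w \<in> jacobson \<and>
            m2similar (fps_nth s 0) (m2const A) (u, 1, v, w)"
    then obtain a' v' d' where k: "fps_nth a' 0 = u" "fps_nth v' 0 = v" "fps_nth d' 0 = w"
      "m2similar s A (a', 1, v', d')" using key by blast
    have "a' - 1 \<in> jacobson" using fps_jac_of_const[of "a' - 1"] h k by simp
    moreover have "v' \<in> units_of_ring" using fps_unit_of_const[of v'] h k by simp
    moreover have "d' \<in> jacobson" using fps_jac_of_const[of d'] h k by simp
    ultimately show "\<exists>ux vx wx. ux - 1 \<in> jacobson \<and> vx \<in> units_of_ring \<and> wx \<in> jacobson \<and>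
             fps_nth ux 0 = u \<and> fps_nth vx 0 = v \<and> fps_nth wx 0 = w \<and>
             m2similar s A (ux, 1, vx, wx)" using k by blast
  next
    fix u v w :: 'a
    assume h: "u - 1 \<in> jacobson \<and> v \<in> units_of_ring \<and> w \<in> jacobson \<and>
            m2similar (fps_nth s 0) (m2const A) (w, 1, v, u)"
    then obtain a' v' d' where k: "fps_nth a' 0 = w" "fps_nth v' 0 = v" "fps_nth d' 0 = u"
      "m2similar s A (a', 1, v', d')" using key by blast
    have "d' - 1 \<in> jacobson" using fps_jac_of_const[of "d' - 1"] h k by simp
    moreover have "v' \<in> units_of_ring" using fps_unit_of_const[of v'] h k by simp
    moreover have "a' \<in> jacobson" using fps_jac_of_const[of a'] h k by simp
    ultimately show "\<exists>ux vx wx. ux - 1 \<in> jacobson \<and> vx \<in> units_of_ring \<and> wx \<in> jacobson \<and>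
             fps_nth ux 0 = u \<and> fps_nth vx 0 = v \<and> fps_nth wx 0 = w \<and>
             m2similar s A (wx, 1, vx, ux)" using k by blast
  qed
qed

end
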